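(* For arbitrary quasi-copulas $A$ and $B$ on $[0,1]^2$, the pairs $(A,A_M)$ and $(B_O,B)$ are imprecise copulas. The same holds in the discrete setting for discrete quasi-copulas on a mesh, with defects computed using rectangles with corners in the mesh.
   Context: A quasi-copula is $Q:[0,1]^2\to\mathbb{R}$ grounded ($Q(x,0)=Q(0,y)=0$), with neutral element $1$ ($Q(x,1)=x$, $Q(1,y)=y$), and with $V_Q(R)\ge0$ for each rectangle having a side on the boundary of $[0,1]^2$, where $V_Q([s_1,s_2]\times[t_1,t_2])=Q(s_1,t_1)+Q(s_2,t_2)-Q(s_2,t_1)-Q(s_1,t_2)$. Defects: for $\mathbf{x}\in[0,1]^2$ let $\mathcal{R}_\nearrow(\mathbf{x}),\mathcal{R}_\swarrow(\mathbf{x}),\mathcal{R}_\nwarrow(\mathbf{x}),\mathcal{R}_\searrow(\mathbf{x})$ be the sets of (possibly degenerate) rectangles in $[0,1]^2$ having $\mathbf{x}$ as southwest, northeast, southeast, northwest corner respectively; $D^Q_\bullet(\mathbf{x})=\inf\{V_Q(R):R\in\mathcal{R}_\bullet(\mathbf{x})\}$; $D^Q_M=\min(D^Q_\nearrow,D^Q_\swarrow)$, $D^Q_O=\min(D^Q_\nwarrow,D^Q_\searrow)$; $Q_M=Q-D^Q_M$ and $Q_O=Q+D^Q_O$. An imprecise copula is a pair $(A,B)$ of grounded functions with neutral element $1$ such that for every rectangle with southwest, southeast, northeast, northwest corners $\mathbf{a},\mathbf{b},\mathbf{c},\mathbf{d}$: $A(\mathbf{a})+B(\mathbf{c})-A(\mathbf{b})-A(\mathbf{d})\ge0$,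 $B(\mathbf{a})+A(\mathbf{c})-A(\mathbf{b})-A(\mathbf{d})\ge0$, $B(\mathbf{a})+B(\mathbf{c})-B(\mathbf{b})-A(\mathbf{d})\ge0$, $B(\mathbf{a})+B(\mathbf{c})-A(\mathbf{b})-B(\mathbf{d})\ge0$. (Discrete versions: same definitions with $[0,1]^2$ replaced by a mesh $\delta_x\times\delta_y$, all points and rectangle corners taken in the mesh.) *)

theory Defs
  imports Complex_Main
begin

text \<open>All notions are relative to a domain X \<times> Y \<subseteq> [0,1]^2 with 0,1 in X and Y:
  the continuous case is X = Y = {0..1}, the discrete case is X, Y meshes.
  Functions are curried, Q x y; only values on X \<times> Y are relevant.\<close>

definition is_mesh :: "real set \<Rightarrow> bool" where
  "is_mesh D \<longleftrightarrow> finite D \<and> D \<subseteq> {0..1} \<and> 0 \<in> D \<and> 1 \<in> D"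

definition Vol :: "(real \<Rightarrow> real \<Rightarrow> real) \<Rightarrow> real \<Rightarrow> real \<Rightarrow> real \<Rightarrow> real \<Rightarrow> real" where
  "Vol Q s1 s2 t1 t2 = Q s1 t1 + Q s2 t2 - Q s2 t1 - Q s1 t2"

definition grounded :: "real set \<Rightarrow> real set \<Rightarrow> (real \<Rightarrow> real \<Rightarrow> real) \<Rightarrow> bool" where
  "grounded X Y Q \<longleftrightarrow> (\<forall>x\<in>X. Q x 0 = 0) \<and> (\<forall>y\<in>Y. Q 0 y = 0)"

definition neutral_one :: "real set \<Rightarrow> real set \<Rightarrow> (real \<Rightarrow> real \<Rightarrow> real) \<Rightarrow> bool" where
  "neutral_one X Y Q \<longleftrightarrow> (\<forall>x\<in>X. Q x 1 = x) \<and> (\<forall>y\<in>Y. Q 1 y = y)"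

definition quasi_copula :: "real set \<Rightarrow> real set \<Rightarrow> (real \<Rightarrow> real \<Rightarrow> real) \<Rightarrow> bool" where
  "quasi_copula X Y Q \<longleftrightarrow> grounded X Y Q \<and> neutral_one X Y Q \<and>
     (\<forall>s1\<in>X. \<forall>s2\<in>X. \<forall>t1\<in>Y. \<forall>t2\<in>Y. s1 \<le> s2 \<and> t1 \<le> t2 \<and>
        (s1 = 0 \<or> s2 = 1 \<or> t1 = 0 \<or> t2 = 1) \<longrightarrow> Vol Q s1 s2 t1 t2 \<ge> 0)"

definition D_SW :: "real set \<Rightarrow> real set \<Rightarrow> (real \<Rightarrow> real \<Rightarrow> real) \<Rightarrow> real \<Rightarrow> real \<Rightarrow> real" where
  "D_SW X Y Q x y = (INF p \<in> {(s,t). s \<in> X \<and> t \<in> Y \<and> x \<le> s \<and> y \<le> t}. Vol Q x (fst p) y (snd p))"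
  \<comment> \<open>D_\<nearrow>: (x,y) is the southwest corner\<close>

definition D_NE :: "real set \<Rightarrow> real set \<Rightarrow> (real \<Rightarrow> real \<Rightarrow> real) \<Rightarrow> real \<Rightarrow> real \<Rightarrow> real" where
  "D_NE X Y Q x y = (INF p \<in> {(s,t). s \<in> X \<and> t \<in> Y \<and> s \<le> x \<and> t \<le> y}. Vol Q (fst p) x (snd p) y)"
  \<comment> \<open>D_\<swarrow>: (x,y) is the northeast corner\<close>

definition D_SE :: "real set \<Rightarrow> real set \<Rightarrow> (real \<Rightarrow> real \<Rightarrow> real) \<Rightarrow> real \<Rightarrow> real \<Rightarrow> real" where
  "D_SE X Y Q x y = (INF p \<in> {(s,t). s \<in> X \<and> t \<in> Y \<and> s \<le> x \<and> y \<le> t}. Vol Q (fst p) x y (snd p))"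
  \<comment> \<open>D_\<nwarrow>: (x,y) is the southeast corner\<close>

definition D_NW :: "real set \<Rightarrow> real set \<Rightarrow> (real \<Rightarrow> real \<Rightarrow> real) \<Rightarrow> real \<Rightarrow> real \<Rightarrow> real" where
  "D_NW X Y Q x y = (INF p \<in> {(s,t). s \<in> X \<and> t \<in> Y \<and> x \<le> s \<and> t \<le> y}. Vol Q x (fst p) (snd p) y)"
  \<comment> \<open>D_\<searrow>: (x,y) is the northwest corner\<close>

definition D_M :: "real set \<Rightarrow> real set \<Rightarrow> (real \<Rightarrow> real \<Rightarrow> real) \<Rightarrow> real \<Rightarrow> real \<Rightarrow> real" where
  "D_M X Y Q x y = min (D_SW X Y Q x y) (D_NE X Y Q x y)"

definition D_O :: "real set \<Rightarrow> real set \<Rightarrow> (real \<Rightarrow> real \<Rightarrow> real) \<Rightarrow> real \<Rightarrow> real \<Rightarrow> real" where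
  "D_O X Y Q x y = min (D_SE X Y Q x y) (D_NW X Y Q x y)"

definition Q_M :: "real set \<Rightarrow> real set \<Rightarrow> (real \<Rightarrow> real \<Rightarrow> real) \<Rightarrow> real \<Rightarrow> real \<Rightarrow> real" where
  "Q_M X Y Q x y = Q x y - D_M X Y Q x y"

definition Q_O :: "real set \<Rightarrow> real set \<Rightarrow> (real \<Rightarrow> real \<Rightarrow> real) \<Rightarrow> real \<Rightarrow> real \<Rightarrow> real" where
  "Q_O X Y Q x y = Q x y + D_O X Y Q x y"

text \<open>Imprecise copula (A,B): both grounded with neutral element 1, and the four inequalities
  for every (possibly degenerate) rectangle [s1,s2] x [t1,t2] with corners in the domain;
  a = (s1,t1) SW, b = (s2,t1) SE, c = (s2,t2) NE, d = (s1,t2) NW.\<close>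
definition imprecise_copula :: "real set \<Rightarrow> real set \<Rightarrow> (real \<Rightarrow> real \<Rightarrow> real) \<Rightarrow> (real \<Rightarrow> real \<Rightarrow> real) \<Rightarrow> bool" where
  "imprecise_copula X Y A B \<longleftrightarrow> grounded X Y A \<and> neutral_one X Y A \<and> grounded X Y B \<and> neutral_one X Y B \<and>
     (\<forall>s1\<in>X. \<forall>s2\<in>X. \<forall>t1\<in>Y. \<forall>t2\<in>Y. s1 \<le> s2 \<and> t1 \<le> t2 \<longrightarrow>
        A s1 t1 + B s2 t2 - A s2 t1 - A s1 t2 \<ge> 0 \<and>
        B s1 t1 + A s2 t2 - A s2 t1 - A s1 t2 \<ge> 0 \<and>
        B s1 t1 + B s2 t2 - B s2 t1 - A s1 t2 \<ge> 0 \<and>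
        B s1 t1 + B s2 t2 - A s2 t1 - B s1 t2 \<ge> 0)"

end

theory Submission
  imports Defs
begin

locale qcd =
  fixes X Y :: "real set" and Q :: "real \<Rightarrow> real \<Rightarrow> real"
  assumes X0: "0 \<in> X" and X1: "1 \<in> X" and Y0: "0 \<in> Y" and Y1: "1 \<in> Y"
    and Xs: "X \<subseteq> {0..1}" and Ys: "Y \<subseteq> {0..1}" and qc: "quasi_copula X Y Q"
begin

lemma vol_nonneg:
  "s1\<in>X \<Longrightarrow> s2\<in>X \<Longrightarrow> t1\<in>Y \<Longrightarrow> t2\<in>Y \<Longrightarrow> s1\<le>s2 \<Longrightarrow> t1\<le>t2 \<Longrightarrow>
   (s1=0 \<or> s2=1 \<or> t1=0 \<or> t2=1) \<Longrightarrow> 0 \<le> Vol Q s1 s2 t1 t2"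
  using qc unfolding quasi_copula_def by blast

lemma gr: "x\<in>X \<Longrightarrow> Q x 0 = 0" "y\<in>Y \<Longrightarrow> Q 0 y = 0"
  using qc unfolding quasi_copula_def grounded_def by auto

lemma ne: "x\<in>X \<Longrightarrow> Q x 1 = x" "y\<in>Y \<Longrightarrow> Q 1 y = y"
  using qc unfolding quasi_copula_def neutral_one_def by auto

lemma inX: "x\<in>X \<Longrightarrow> 0 \<le> x \<and> x \<le> 1" using Xs by auto
lemma inY: "y\<in>Y \<Longrightarrow> 0 \<le> y \<and> y \<le> 1" using Ys by auto

lemma Qbnd: assumes "x\<in>X" "y\<in>Y" shows "0 \<le> Q x y \<and> Q x y \<le> 1"
proof -
  have "0 \<le> Vol Q 0 x 0 y" using vol_nonneg[of 0 x 0 y] assms X0 Y0 inX inY by auto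
  moreover have "0 \<le> Vol Q x 1 0 y" using vol_nonneg[of x 1 0 y] assms X1 Y0 inX inY by auto
  ultimately show ?thesis using gr(1)[of 0] gr(1)[of x] gr(2)[of y] gr(1)[of 1] ne[of y] assms X0 X1 Y0 inY[of y]
    unfolding Vol_def by auto
qed

lemma Vol_lb: "a\<in>X \<Longrightarrow> b\<in>X \<Longrightarrow> c\<in>Y \<Longrightarrow> d\<in>Y \<Longrightarrow> -2 \<le> Vol Q a b c d"
  using Qbnd[of a c] Qbnd[of b d] Qbnd[of b c] Qbnd[of a d] unfolding Vol_def by auto

lemma SW_le: assumes "x\<in>X" "y\<in>Y" "s\<in>X" "t\<in>Y" "x\<le>s" "y\<le>t"
  shows "D_SW X Y Q x y \<le> Vol Q x s y t"
proof -
  have "bdd_below ((\<lambda>p. Vol Q x (fst p) y (snd p)) ` {(s,t). s\<in>X \<and> t\<in>Y \<and> x\<le>s \<and> y\<le>t})"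
    by (rule bdd_belowI[where m="-2"]) (auto intro: Vol_lb assms)
  from cINF_lower[OF this, of "(s,t)"] assms show ?thesis unfolding D_SW_def by simp
qed

lemma SW_ge: assumes "x\<in>X" "y\<in>Y"
  and "\<And>s t. s\<in>X \<Longrightarrow> t\<in>Y \<Longrightarrow> x\<le>s \<Longrightarrow> y\<le>t \<Longrightarrow> L \<le> Vol Q x s y t"
  shows "L \<le> D_SW X Y Q x y"
proof -
  have "(x,y) \<in> {(s,t). s\<in>X \<and> t\<in>Y \<and> x\<le>s \<and> y\<le>t}" using assms by simp
  then show ?thesis unfolding D_SW_def by (intro cINF_greatest) (auto intro: assms(3))
qed

lemma NE_le: assumes "x\<in>X" "y\<in>Y" "s\<in>X" "t\<in>Y" "s\<le>x" "t\<le>y"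
  shows "D_NE X Y Q x y \<le> Vol Q s x t y"
proof -
  have "bdd_below ((\<lambda>p. Vol Q (fst p) x (snd p) y) ` {(s,t). s\<in>X \<and> t\<in>Y \<and> s\<le>x \<and> t\<le>y})"
    by (rule bdd_belowI[where m="-2"]) (auto intro: Vol_lb assms)
  from cINF_lower[OF this, of "(s,t)"] assms show ?thesis unfolding D_NE_def by simp
qed

lemma NE_ge: assumes "x\<in>X" "y\<in>Y"
  and "\<And>s t. s\<in>X \<Longrightarrow> t\<in>Y \<Longrightarrow> s\<le>x \<Longrightarrow> t\<le>y \<Longrightarrow> L \<le> Vol Q s x t y"
  shows "L \<le> D_NE X Y Q x y"
proof -
  have "(x,y) \<in> {(s,t). s\<in>X \<and> t\<in>Y \<and> s\<le>x \<and> t\<le>y}" using assms by simp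
  then show ?thesis unfolding D_NE_def by (intro cINF_greatest) (auto intro: assms(3))
qed

lemma SE_le: assumes "x\<in>X" "y\<in>Y" "s\<in>X" "t\<in>Y" "s\<le>x" "y\<le>t"
  shows "D_SE X Y Q x y \<le> Vol Q s x y t"
proof -
  have "bdd_below ((\<lambda>p. Vol Q (fst p) x y (snd p)) ` {(s,t). s\<in>X \<and> t\<in>Y \<and> s\<le>x \<and> y\<le>t})"
    by (rule bdd_belowI[where m="-2"]) (auto intro: Vol_lb assms)
  from cINF_lower[OF this, of "(s,t)"] assms show ?thesis unfolding D_SE_def by simp
qed

lemma SE_ge: assumes "x\<in>X" "y\<in>Y"
  and "\<And>s t. s\<in>X \<Longrightarrow> t\<in>Y \<Longrightarrow> s\<le>x \<Longrightarrow> y\<le>t \<Longrightarrow> L \<le> Vol Q s x y t"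
  shows "L \<le> D_SE X Y Q x y"
proof -
  have "(x,y) \<in> {(s,t). s\<in>X \<and> t\<in>Y \<and> s\<le>x \<and> y\<le>t}" using assms by simp
  then show ?thesis unfolding D_SE_def by (intro cINF_greatest) (auto intro: assms(3))
qed

lemma NW_le: assumes "x\<in>X" "y\<in>Y" "s\<in>X" "t\<in>Y" "x\<le>s" "t\<le>y"
  shows "D_NW X Y Q x y \<le> Vol Q x s t y"
proof -
  have "bdd_below ((\<lambda>p. Vol Q x (fst p) (snd p) y) ` {(s,t). s\<in>X \<and> t\<in>Y \<and> x\<le>s \<and> t\<le>y})"
    by (rule bdd_belowI[where m="-2"]) (auto intro: Vol_lb assms)
  from cINF_lower[OF this, of "(s,t)"] assms show ?thesis unfolding D_NW_def by simp
qed

lemma NW_ge: assumes "x\<in>X" "y\<in>Y"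
  and "\<And>s t. s\<in>X \<Longrightarrow> t\<in>Y \<Longrightarrow> x\<le>s \<Longrightarrow> t\<le>y \<Longrightarrow> L \<le> Vol Q x s t y"
  shows "L \<le> D_NW X Y Q x y"
proof -
  have "(x,y) \<in> {(s,t). s\<in>X \<and> t\<in>Y \<and> x\<le>s \<and> t\<le>y}" using assms by simp
  then show ?thesis unfolding D_NW_def by (intro cINF_greatest) (auto intro: assms(3))
qed

lemma Vol_degen: "Vol Q x x y y = 0" unfolding Vol_def by simp

lemma bnd_zero:
  assumes "x\<in>X" "y\<in>Y" "x=0 \<or> x=1 \<or> y=0 \<or> y=1"
  shows "D_M X Y Q x y = 0" "D_O X Y Q x y = 0"
proof -
  have "D_SW X Y Q x y \<le> 0" using SW_le[of x y x y] assms Vol_degen by auto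
  have "D_NE X Y Q x y \<le> 0" using NE_le[of x y x y] assms Vol_degen by auto
  have "D_SE X Y Q x y \<le> 0" using SE_le[of x y x y] assms Vol_degen by auto
  have "D_NW X Y Q x y \<le> 0" using NW_le[of x y x y] assms Vol_degen by auto
  have "0 \<le> D_SW X Y Q x y"
    apply (rule SW_ge[OF assms(1,2)])
    apply (rule vol_nonneg) using assms inX inY by (auto; smt (verit))+
  have "0 \<le> D_NE X Y Q x y"
    apply (rule NE_ge[OF assms(1,2)])
    apply (rule vol_nonneg) using assms inX inY by (auto; smt (verit))+
  have "0 \<le> D_SE X Y Q x y"
    apply (rule SE_ge[OF assms(1,2)])
    apply (rule vol_nonneg) using assms inX inY by (auto; smt (verit))+
  have "0 \<le> D_NW X Y Q x y"
    apply (rule NW_ge[OF assms(1,2)])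
    apply (rule vol_nonneg) using assms inX inY by (auto; smt (verit))+
  show "D_M X Y Q x y = 0" "D_O X Y Q x y = 0" unfolding D_M_def D_O_def
    using \<open>D_SW X Y Q x y \<le> 0\<close> \<open>D_NE X Y Q x y \<le> 0\<close> \<open>D_SE X Y Q x y \<le> 0\<close> \<open>D_NW X Y Q x y \<le> 0\<close>
      \<open>0 \<le> D_SW X Y Q x y\<close> \<open>0 \<le> D_NE X Y Q x y\<close> \<open>0 \<le> D_SE X Y Q x y\<close> \<open>0 \<le> D_NW X Y Q x y\<close>
    by auto
qed

abbreviation "DM \<equiv> D_M X Y Q"
abbreviation "DO \<equiv> D_O X Y Q"

lemma DM_SW: "x\<in>X \<Longrightarrow> y\<in>Y \<Longrightarrow> s\<in>X \<Longrightarrow> t\<in>Y \<Longrightarrow> x\<le>s \<Longrightarrow> y\<le>t \<Longrightarrow> DM x y \<le> Vol Q x s y t"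
  using SW_le[of x y s t] unfolding D_M_def by linarith
lemma DM_NE: "x\<in>X \<Longrightarrow> y\<in>Y \<Longrightarrow> s\<in>X \<Longrightarrow> t\<in>Y \<Longrightarrow> s\<le>x \<Longrightarrow> t\<le>y \<Longrightarrow> DM x y \<le> Vol Q s x t y"
  using NE_le[of x y s t] unfolding D_M_def by linarith
lemma DO_SE: "x\<in>X \<Longrightarrow> y\<in>Y \<Longrightarrow> s\<in>X \<Longrightarrow> t\<in>Y \<Longrightarrow> s\<le>x \<Longrightarrow> y\<le>t \<Longrightarrow> DO x y \<le> Vol Q s x y t"
  using SE_le[of x y s t] unfolding D_O_def by linarith
lemma DO_NW: "x\<in>X \<Longrightarrow> y\<in>Y \<Longrightarrow> s\<in>X \<Longrightarrow> t\<in>Y \<Longrightarrow> x\<le>s \<Longrightarrow> t\<le>y \<Longrightarrow> DO x y \<le> Vol Q x s t y"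
  using NW_le[of x y s t] unfolding D_O_def by linarith

context
  fixes s1 s2 t1 t2 assumes r: "s1\<in>X" "s2\<in>X" "t1\<in>Y" "t2\<in>Y" "s1\<le>s2" "t1\<le>t2"
begin

lemma M3: "DM s1 t1 + DM s2 t2 - Vol Q s1 s2 t1 t2 \<le> DM s2 t1"
proof -
  let ?L = "DM s1 t1 + DM s2 t2 - Vol Q s1 s2 t1 t2"
  have "?L \<le> D_SW X Y Q s2 t1"
  proof (rule SW_ge)
    fix s3 t3 assume h: "s3\<in>X" "t3\<in>Y" "s2\<le>s3" "t1\<le>t3"
    show "?L \<le> Vol Q s2 s3 t1 t3"
    proof (cases "t2 \<le> t3")
      case True
      have "DM s1 t1 \<le> Vol Q s1 s3 t1 t2" using DM_SW r h by auto
      moreover have "DM s2 t2 \<le> Vol Q s2 s3 t2 t3" using DM_SW r h True by auto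
      ultimately show ?thesis unfolding Vol_def by linarith
    next
      case False
      have "DM s1 t1 \<le> Vol Q s1 s3 t1 t3" using DM_SW r h by auto
      moreover have "DM s2 t2 \<le> Vol Q s1 s2 t3 t2" using DM_NE r h False by auto
      ultimately show ?thesis unfolding Vol_def by linarith
    qed
  qed (use r in auto)
  moreover have "?L \<le> D_NE X Y Q s2 t1"
  proof (rule NE_ge)
    fix s0 t0 assume h: "s0\<in>X" "t0\<in>Y" "s0\<le>s2" "t0\<le>t1"
    show "?L \<le> Vol Q s0 s2 t0 t1"
    proof (cases "s0 \<le> s1")
      case True
      have "DM s1 t1 \<le> Vol Q s0 s1 t0 t1" using DM_NE r h True by auto
      moreover have "DM s2 t2 \<le> Vol Q s1 s2 t0 t2" using DM_NE r h by auto
      ultimately show ?thesis unfolding Vol_def by linarith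
    next
      case False
      have "DM s1 t1 \<le> Vol Q s1 s0 t1 t2" using DM_SW r h False by auto
      moreover have "DM s2 t2 \<le> Vol Q s0 s2 t0 t2" using DM_NE r h by auto
      ultimately show ?thesis unfolding Vol_def by linarith
    qed
  qed (use r in auto)
  ultimately show ?thesis unfolding D_M_def by linarith
qed

lemma M4: "DM s1 t1 + DM s2 t2 - Vol Q s1 s2 t1 t2 \<le> DM s1 t2"
proof -
  let ?L = "DM s1 t1 + DM s2 t2 - Vol Q s1 s2 t1 t2"
  have "?L \<le> D_SW X Y Q s1 t2"
  proof (rule SW_ge)
    fix s3 t3 assume h: "s3\<in>X" "t3\<in>Y" "s1\<le>s3" "t2\<le>t3"
    show "?L \<le> Vol Q s1 s3 t2 t3"
    proof (cases "s2 \<le> s3")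
      case True
      have "DM s1 t1 \<le> Vol Q s1 s2 t1 t3" using DM_SW r h by auto
      moreover have "DM s2 t2 \<le> Vol Q s2 s3 t2 t3" using DM_SW r h True by auto
      ultimately show ?thesis unfolding Vol_def by linarith
    next
      case False
      have "DM s1 t1 \<le> Vol Q s1 s3 t1 t3" using DM_SW r h by auto
      moreover have "DM s2 t2 \<le> Vol Q s3 s2 t1 t2" using DM_NE r h False by auto
      ultimately show ?thesis unfolding Vol_def by linarith
    qed
  qed (use r in auto)
  moreover have "?L \<le> D_NE X Y Q s1 t2"
  proof (rule NE_ge)
    fix s0 t0 assume h: "s0\<in>X" "t0\<in>Y" "s0\<le>s1" "t0\<le>t2"
    show "?L \<le> Vol Q s0 s1 t0 t2"
    proof (cases "t0 \<le> t1")
      case True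
      have "DM s1 t1 \<le> Vol Q s0 s1 t0 t1" using DM_NE r h True by auto
      moreover have "DM s2 t2 \<le> Vol Q s0 s2 t1 t2" using DM_NE r h by auto
      ultimately show ?thesis unfolding Vol_def by linarith
    next
      case False
      have "DM s1 t1 \<le> Vol Q s1 s2 t1 t0" using DM_SW r h False by auto
      moreover have "DM s2 t2 \<le> Vol Q s0 s2 t0 t2" using DM_NE r h by auto
      ultimately show ?thesis unfolding Vol_def by linarith
    qed
  qed (use r in auto)
  ultimately show ?thesis unfolding D_M_def by linarith
qed

lemma O1: "DO s2 t1 + DO s1 t2 - Vol Q s1 s2 t1 t2 \<le> DO s1 t1"
proof -
  let ?L = "DO s2 t1 + DO s1 t2 - Vol Q s1 s2 t1 t2"
  have "?L \<le> D_SE X Y Q s1 t1"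
  proof (rule SE_ge)
    fix s0 t3 assume h: "s0\<in>X" "t3\<in>Y" "s0\<le>s1" "t1\<le>t3"
    show "?L \<le> Vol Q s0 s1 t1 t3"
    proof (cases "t2 \<le> t3")
      case True
      have "DO s1 t2 \<le> Vol Q s0 s1 t2 t3" using DO_SE r h True by auto
      moreover have "DO s2 t1 \<le> Vol Q s0 s2 t1 t2" using DO_SE r h by auto
      ultimately show ?thesis unfolding Vol_def by linarith
    next
      case False
      have "DO s2 t1 \<le> Vol Q s0 s2 t1 t3" using DO_SE r h by auto
      moreover have "DO s1 t2 \<le> Vol Q s1 s2 t3 t2" using DO_NW r h False by auto
      ultimately show ?thesis unfolding Vol_def by linarith
    qed
  qed (use r in auto)
  moreover have "?L \<le> D_NW X Y Q s1 t1"
  proof (rule NW_ge)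
    fix s3 t0 assume h: "s3\<in>X" "t0\<in>Y" "s1\<le>s3" "t0\<le>t1"
    show "?L \<le> Vol Q s1 s3 t0 t1"
    proof (cases "s2 \<le> s3")
      case True
      have "DO s1 t2 \<le> Vol Q s1 s2 t0 t2" using DO_NW r h by auto
      moreover have "DO s2 t1 \<le> Vol Q s2 s3 t0 t1" using DO_NW r h True by auto
      ultimately show ?thesis unfolding Vol_def by linarith
    next
      case False
      have "DO s1 t2 \<le> Vol Q s1 s3 t0 t2" using DO_NW r h by auto
      moreover have "DO s2 t1 \<le> Vol Q s3 s2 t1 t2" using DO_SE r h False by auto
      ultimately show ?thesis unfolding Vol_def by linarith
    qed
  qed (use r in auto)
  ultimately show ?thesis unfolding D_O_def by linarith
qed

lemma O2: "DO s2 t1 + DO s1 t2 - Vol Q s1 s2 t1 t2 \<le> DO s2 t2"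
proof -
  let ?L = "DO s2 t1 + DO s1 t2 - Vol Q s1 s2 t1 t2"
  have "?L \<le> D_SE X Y Q s2 t2"
  proof (rule SE_ge)
    fix s0 t3 assume h: "s0\<in>X" "t3\<in>Y" "s0\<le>s2" "t2\<le>t3"
    show "?L \<le> Vol Q s0 s2 t2 t3"
    proof (cases "s0 \<le> s1")
      case True
      have "DO s1 t2 \<le> Vol Q s0 s1 t2 t3" using DO_SE r h True by auto
      moreover have "DO s2 t1 \<le> Vol Q s1 s2 t1 t3" using DO_SE r h by auto
      ultimately show ?thesis unfolding Vol_def by linarith
    next
      case False
      have "DO s2 t1 \<le> Vol Q s0 s2 t1 t3" using DO_SE r h by auto
      moreover have "DO s1 t2 \<le> Vol Q s1 s0 t1 t2" using DO_NW r h False by auto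
      ultimately show ?thesis unfolding Vol_def by linarith
    qed
  qed (use r in auto)
  moreover have "?L \<le> D_NW X Y Q s2 t2"
  proof (rule NW_ge)
    fix s3 t0 assume h: "s3\<in>X" "t0\<in>Y" "s2\<le>s3" "t0\<le>t2"
    show "?L \<le> Vol Q s2 s3 t0 t2"
    proof (cases "t0 \<le> t1")
      case True
      have "DO s1 t2 \<le> Vol Q s1 s3 t1 t2" using DO_NW r h by auto
      moreover have "DO s2 t1 \<le> Vol Q s2 s3 t0 t1" using DO_NW r h True by auto
      ultimately show ?thesis unfolding Vol_def by linarith
    next
      case False
      have "DO s1 t2 \<le> Vol Q s1 s3 t0 t2" using DO_NW r h by auto
      moreover have "DO s2 t1 \<le> Vol Q s1 s2 t1 t0" using DO_SE r h False by auto
      ultimately show ?thesis unfolding Vol_def by linarith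
    qed
  qed (use r in auto)
  ultimately show ?thesis unfolding D_O_def by linarith
qed

end

lemma imprecise_M: "imprecise_copula X Y Q (Q_M X Y Q)"
  unfolding imprecise_copula_def
proof (intro conjI ballI impI)
  show "grounded X Y Q" "neutral_one X Y Q" using qc unfolding quasi_copula_def by auto
  show "grounded X Y (Q_M X Y Q)" "neutral_one X Y (Q_M X Y Q)"
    using gr ne bnd_zero X0 X1 Y0 Y1 unfolding grounded_def neutral_one_def Q_M_def by auto
  fix s1 s2 t1 t2 assume h: "s1\<in>X" "s2\<in>X" "t1\<in>Y" "t2\<in>Y" "s1 \<le> s2 \<and> t1 \<le> t2"
  have a: "DM s2 t2 \<le> Vol Q s1 s2 t1 t2" using DM_NE h by auto
  have b: "DM s1 t1 \<le> Vol Q s1 s2 t1 t2" using DM_SW h by auto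
  have c: "DM s1 t1 + DM s2 t2 - Vol Q s1 s2 t1 t2 \<le> DM s2 t1" using M3 h by auto
  have d: "DM s1 t1 + DM s2 t2 - Vol Q s1 s2 t1 t2 \<le> DM s1 t2" using M4 h by auto
  show "0 \<le> Q s1 t1 + Q_M X Y Q s2 t2 - Q s2 t1 - Q s1 t2"
       "0 \<le> Q_M X Y Q s1 t1 + Q s2 t2 - Q s2 t1 - Q s1 t2"
       "0 \<le> Q_M X Y Q s1 t1 + Q_M X Y Q s2 t2 - Q_M X Y Q s2 t1 - Q s1 t2"
       "0 \<le> Q_M X Y Q s1 t1 + Q_M X Y Q s2 t2 - Q s2 t1 - Q_M X Y Q s1 t2"
    using a b c d unfolding Q_M_def Vol_def by linarith+
qed

lemma imprecise_O: "imprecise_copula X Y (Q_O X Y Q) Q"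
  unfolding imprecise_copula_def
proof (intro conjI ballI impI)
  show "grounded X Y Q" "neutral_one X Y Q" using qc unfolding quasi_copula_def by auto
  show "grounded X Y (Q_O X Y Q)" "neutral_one X Y (Q_O X Y Q)"
    using gr ne bnd_zero X0 X1 Y0 Y1 unfolding grounded_def neutral_one_def Q_O_def by auto
  fix s1 s2 t1 t2 assume h: "s1\<in>X" "s2\<in>X" "t1\<in>Y" "t2\<in>Y" "s1 \<le> s2 \<and> t1 \<le> t2"
  have a: "DO s1 t2 \<le> Vol Q s1 s2 t1 t2" using DO_NW h by auto
  have b: "DO s2 t1 \<le> Vol Q s1 s2 t1 t2" using DO_SE h by auto
  have c: "DO s2 t1 + DO s1 t2 - Vol Q s1 s2 t1 t2 \<le> DO s1 t1" using O1 h by auto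
  have d: "DO s2 t1 + DO s1 t2 - Vol Q s1 s2 t1 t2 \<le> DO s2 t2" using O2 h by auto
  show "0 \<le> Q_O X Y Q s1 t1 + Q s2 t2 - Q_O X Y Q s2 t1 - Q_O X Y Q s1 t2"
       "0 \<le> Q s1 t1 + Q_O X Y Q s2 t2 - Q_O X Y Q s2 t1 - Q_O X Y Q s1 t2"
       "0 \<le> Q s1 t1 + Q s2 t2 - Q s2 t1 - Q_O X Y Q s1 t2"
       "0 \<le> Q s1 t1 + Q s2 t2 - Q_O X Y Q s2 t1 - Q s1 t2"
    using a b c d unfolding Q_O_def Vol_def by linarith+
qed

end

theorem mainTheorem7:
  shows "(\<forall>A B. quasi_copula {0..1} {0..1} A \<and> quasi_copula {0..1} {0..1} B \<longrightarrow>
            imprecise_copula {0..1} {0..1} A (Q_M {0..1} {0..1} A) \<and>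
            imprecise_copula {0..1} {0..1} (Q_O {0..1} {0..1} B) B)
       \<and> (\<forall>X Y A B. is_mesh X \<and> is_mesh Y \<and> quasi_copula X Y A \<and> quasi_copula X Y B \<longrightarrow>
            imprecise_copula X Y A (Q_M X Y A) \<and>
            imprecise_copula X Y (Q_O X Y B) B)"
proof (intro conjI allI impI)
  fix A B :: "real \<Rightarrow> real \<Rightarrow> real"
  assume h: "quasi_copula {0..1} {0..1} A \<and> quasi_copula {0..1} {0..1} B"
  then interpret a: qcd "{0..1}" "{0..1}" A by unfold_locales auto
  from h interpret b: qcd "{0..1}" "{0..1}" B by unfold_locales auto
  show "imprecise_copula {0..1} {0..1} A (Q_M {0..1} {0..1} A)" by (rule a.imprecise_M)
  show "imprecise_copula {0..1} {0..1} (Q_O {0..1} {0..1} B) B" by (rule b.imprecise_O)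
next
  fix X Y :: "real set" and A B :: "real \<Rightarrow> real \<Rightarrow> real"
  assume h: "is_mesh X \<and> is_mesh Y \<and> quasi_copula X Y A \<and> quasi_copula X Y B"
  then interpret a: qcd X Y A by unfold_locales (auto simp: is_mesh_def)
  from h interpret b: qcd X Y B by unfold_locales (auto simp: is_mesh_def)
  show "imprecise_copula X Y A (Q_M X Y A)" by (rule a.imprecise_M)
  show "imprecise_copula X Y (Q_O X Y B) B" by (rule b.imprecise_O)
qed

end
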